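(* Let $A_0(z)$ be the unique function holomorphic near $z=0$ with $A_0(0)=0$ and $z(1+A_0(z))^3=A_0(z)$, and define $A_{k}(z)$, $k\ge1$, recursively by the recurrence below. Define numbers $A_k[n]$ by $A_k(z)=(-1)^k\sum_{n=1}^\infty A_k[n]z^n$. Then for all $k\ge0$ and $n\ge1$, $A_k[n]$ is a positive integer, and $A_k[1]=1$.
   Context: With $\delta_z=z\frac{d}{dz}$, for $k\ge0$: $$A_{k+1}=\frac{1+A_0}{2A_0-1}\Bigl(\delta_z^2A_k+\sum_{i+j=k}\bigl(A_i\delta_z^2A_j-\delta_zA_i\,\delta_zA_j\bigr)-3z\!\!\sum_{\substack{i+j=k+1\\ i,j\le k}}\!\!A_iA_j-z\!\!\!\sum_{\substack{j_1+j_2+j_3=k+1\\ j_1,j_2,j_3\le k}}\!\!\!A_{j_1}A_{j_2}A_{j_3}\Bigr),$$ all indices nonnegative. Equivalently, $(A_k)_{k\ge0}$ is the unique sequence of functions holomorphic in $|z|<4/27$ such that $\sum_k A_k(z)a^{-2k}$ formally solves $a^2(z(1+A)^3-A)=(1+A)\delta_z^2A-(\delta_zA)^2$. *)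

theory Defs
  imports "HOL-Complex_Analysis.Complex_Analysis"
begin

definition euler_op :: "(complex \<Rightarrow> complex) \<Rightarrow> complex \<Rightarrow> complex" where
  "euler_op f = (\<lambda>z. z * deriv f z)"

text \<open>One step of the recurrence: given A_0,...,A_k (as the function B restricted to indices \<le> k),
  produce A_(k+1).\<close>
definition rec_step :: "(nat \<Rightarrow> complex \<Rightarrow> complex) \<Rightarrow> nat \<Rightarrow> complex \<Rightarrow> complex" where
  "rec_step B k = (\<lambda>z. (1 + B 0 z) / (2 * B 0 z - 1) *
      ( euler_op (euler_op (B k)) z
      + (\<Sum>i\<le>k. B i z * euler_op (euler_op (B (k - i))) z
                  - euler_op (B i) z * euler_op (B (k - i)) z)
      - 3 * z * (\<Sum>(i, j) \<in> {(i, j). i + j = k + 1 \<and> i \<le> k \<and> j \<le> k}. B i z * B j z)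
      - z * (\<Sum>(j1, j2, j3) \<in> {(j1, j2, j3). j1 + j2 + j3 = k + 1 \<and> j1 \<le> k \<and> j2 \<le> k \<and> j3 \<le> k}.
               B j1 z * B j2 z * B j3 z)))"

primrec A_list :: "(complex \<Rightarrow> complex) \<Rightarrow> nat \<Rightarrow> (complex \<Rightarrow> complex) list" where
  "A_list A0 0 = [A0]"
| "A_list A0 (Suc k) = A_list A0 k @ [rec_step (\<lambda>i. A_list A0 k ! i) k]"

definition A_seq :: "(complex \<Rightarrow> complex) \<Rightarrow> nat \<Rightarrow> complex \<Rightarrow> complex" where
  "A_seq A0 k = A_list A0 k ! k"

definition taylor_coeff :: "(complex \<Rightarrow> complex) \<Rightarrow> nat \<Rightarrow> complex" where
  "taylor_coeff f n = (deriv ^^ n) f 0 / fact n"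

end

theory Submission
  imports Defs
begin

lemma Nats_sum: "(\<And>x. x \<in> A \<Longrightarrow> f x \<in> \<nat>) \<Longrightarrow> sum f A \<in> (\<nat>::complex set)"
  by (induction A rule: infinite_finite_induct) auto

lemma Nats_add_nz: "(x::complex) \<in> \<nat> \<Longrightarrow> y \<in> \<nat> \<Longrightarrow> x \<noteq> 0 \<Longrightarrow> x + y \<noteq> 0"
  by (auto elim!: Nats_cases simp flip: of_nat_add)

definition NNupto :: "nat \<Rightarrow> complex fps \<Rightarrow> bool" where
  "NNupto m F \<longleftrightarrow> (\<forall>i\<le>m. F $ i \<in> \<nat>)"

definition NN :: "complex fps \<Rightarrow> bool" where
  "NN F \<longleftrightarrow> (\<forall>i. F $ i \<in> \<nat>)"

lemma NN_NNupto: "NN F \<longleftrightarrow> (\<forall>m. NNupto m F)"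
  by (auto simp: NN_def NNupto_def)

lemma NNupto_add: "NNupto m F \<Longrightarrow> NNupto m G \<Longrightarrow> NNupto m (F + G)"
  by (auto simp: NNupto_def)

lemma NNupto_mult: "NNupto m F \<Longrightarrow> NNupto m G \<Longrightarrow> NNupto m (F * G)"
  unfolding NNupto_def fps_mult_nth by (auto intro!: Nats_sum Nats_mult)

lemma NNupto_one: "NNupto m 1"
  by (auto simp: NNupto_def)

lemma NNupto_power: "NNupto m F \<Longrightarrow> NNupto m (F ^ j)"
  by (induction j) (auto intro: NNupto_mult NNupto_one)

lemma NNupto_X: "NNupto m F \<Longrightarrow> NNupto (Suc m) (fps_X * F)"
  by (auto simp: NNupto_def)

lemma NNupto_0: "F $ 0 \<in> \<nat> \<Longrightarrow> NNupto 0 F"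
  by (auto simp: NNupto_def)

lemma NN_lin:
  assumes eq: "Y = U + fps_X * (V * Y)" and U: "NN U" and V: "NN V"
  shows "NN Y"
proof -
  have "NNupto m Y" for m
  proof (induction m)
    case 0
    have "Y $ 0 = U $ 0" by (subst eq) simp
    then show ?case using U by (auto simp: NN_def intro!: NNupto_0)
  next
    case (Suc m)
    have "NNupto (Suc m) (U + fps_X * (V * Y))"
      using U V Suc by (intro NNupto_add NNupto_X NNupto_mult) (auto simp: NN_NNupto)
    then show ?case using eq by simp
  qed
  then show ?thesis by (simp add: NN_NNupto)
qed

lemma NN_add: "NN F \<Longrightarrow> NN G \<Longrightarrow> NN (F + G)" by (auto simp: NN_def)
lemma NN_mult: "NN F \<Longrightarrow> NN G \<Longrightarrow> NN (F * G)" by (simp add: NN_NNupto NNupto_mult)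
lemma NN_X: "NN F \<Longrightarrow> NN (fps_X * F)" by (auto simp: NN_def)
lemma NN_numeral: "NN (numeral n)" by (auto simp: NN_def fps_numeral_nth)
lemma NN_one: "NN 1" by (auto simp: NN_def)
lemma NN_sum: "(\<And>x. x \<in> A \<Longrightarrow> NN (f x)) \<Longrightarrow> NN (sum f A)"
  by (auto simp: NN_def fps_sum_nth intro!: Nats_sum)

definition eul :: "complex fps \<Rightarrow> complex fps" where
  "eul F = fps_X * fps_deriv F"

lemma eul_nth: "eul F $ n = of_nat n * F $ n"
  by (cases n) (auto simp: eul_def)

lemma NN_eul: "NN F \<Longrightarrow> NN (eul F)" by (auto simp: NN_def eul_nth)


lemma half_Nats: assumes "(x::complex) \<in> \<int>" "2 * x \<in> \<nat>" shows "x \<in> \<nat>"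
proof -
  obtain m where m: "x = of_int m" using assms(1) by (auto elim: Ints_cases)
  obtain N where N: "2 * x = of_nat N" using assms(2) by (auto elim: Nats_cases)
  have "of_int (2 * m) = (of_int (int N) :: complex)" using m N by simp
  hence "2 * m = int N" by (simp only: of_int_eq_iff)
  hence "m \<ge> 0" by simp
  hence "x = of_nat (nat m)" using m by simp
  thus ?thesis by simp
qed

lemma NN_quad:
  fixes k :: nat
  assumes "\<And>i. i \<le> k \<Longrightarrow> NN (b i)"
  shows "NN (\<Sum>i\<le>k. b i * eul (eul (b (k - i))) - eul (b i) * eul (b (k - i)))"
  unfolding NN_def
proof
  fix n
  define \<beta> where "\<beta> = (\<lambda>(i,p). b i $ p * b (k - i) $ (n - p))"
  define g where "g = (\<lambda>p. (of_nat (n - p) :: complex) * of_nat (n - p) - of_nat p * of_nat (n - p))"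
  define I where "I = {..k} \<times> {0..n}"
  have bN: "\<And>i p. i \<le> k \<Longrightarrow> b i $ p \<in> \<nat>" using assms by (auto simp: NN_def)
  have "(\<Sum>i\<le>k. b i * eul (eul (b (k - i))) - eul (b i) * eul (b (k - i))) $ n
      = (\<Sum>i\<le>k. \<Sum>p=0..n. \<beta> (i,p) * g p)"
    unfolding fps_sum_nth fps_sub_nth
    by (intro sum.cong refl) (simp add: fps_mult_nth eul_nth \<beta>_def g_def sum_subtractf[symmetric] algebra_simps)
  also have "\<dots> = (\<Sum>x\<in>I. \<beta> x * g (snd x))"
    unfolding I_def sum.cartesian_product by (intro sum.cong refl) auto
  finally have eq: "(\<Sum>i\<le>k. b i * eul (eul (b (k - i))) - eul (b i) * eul (b (k - i))) $ n
      = (\<Sum>x\<in>I. \<beta> x * g (snd x))" .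
  have \<beta>N: "x \<in> I \<Longrightarrow> \<beta> x \<in> \<nat>" for x using bN[of "fst x"] bN[of "k - fst x"] by (auto simp: I_def \<beta>_def intro!: Nats_mult)
  have sw: "(\<Sum>x\<in>I. \<beta> x * g (snd x)) = (\<Sum>x\<in>I. \<beta> x * g (n - snd x))"
    by (rule sum.reindex_bij_witness[of _ "\<lambda>(i,p). (k - i, n - p)" "\<lambda>(i,p). (k - i, n - p)"])
       (auto simp: I_def \<beta>_def mult.commute)
  have "2 * (\<Sum>x\<in>I. \<beta> x * g (snd x)) = (\<Sum>x\<in>I. \<beta> x * (g (snd x) + g (n - snd x)))"
    by (subst mult_2, subst (2) sw) (simp add: sum.distrib algebra_simps)
  also have "\<dots> = (\<Sum>x\<in>I. \<beta> x * of_nat (nat ((int (n - snd x) - int (snd x))^2)))"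
  proof (intro sum.cong refl)
    fix x assume "x \<in> I"
    hence "snd x \<le> n" by (auto simp: I_def)
    hence "g (snd x) + g (n - snd x) = of_int ((int (n - snd x) - int (snd x))^2)"
      by (simp add: g_def algebra_simps power2_eq_square of_nat_diff)
    also have "\<dots> = of_nat (nat ((int (n - snd x) - int (snd x))^2))"
      by simp
    finally show "\<beta> x * (g (snd x) + g (n - snd x)) = \<beta> x * of_nat (nat ((int (n - snd x) - int (snd x))^2))"
      by simp
  qed
  also have "\<dots> \<in> \<nat>"
    by (rule Nats_sum, rule Nats_mult, erule \<beta>N, rule of_nat_in_Nats)
  finally have two: "2 * (\<Sum>x\<in>I. \<beta> x * g (snd x)) \<in> \<nat>" .
  have ints: "(\<Sum>x\<in>I. \<beta> x * g (snd x)) \<in> \<int>"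
  proof (rule Ints_sum, rule Ints_mult)
    fix x assume "x \<in> I"
    then show "\<beta> x \<in> \<int>" using \<beta>N Nats_subset_Ints by blast
  next
    fix x show "g (snd x) \<in> \<int>" unfolding g_def by (intro Ints_diff Ints_mult Ints_of_nat)
  qed
  show "(\<Sum>i\<le>k. b i * eul (eul (b (k - i))) - eul (b i) * eul (b (k - i))) $ n \<in> \<nat>"
    unfolding eq by (rule half_Nats[OF ints two])
qed

definition rec_fps :: "(nat \<Rightarrow> complex fps) \<Rightarrow> nat \<Rightarrow> complex fps" where
  "rec_fps G k = (1 + G 0) / (2 * G 0 - 1) *
      ( eul (eul (G k))
      + (\<Sum>i\<le>k. G i * eul (eul (G (k - i))) - eul (G i) * eul (G (k - i)))
      - 3 * fps_X * (\<Sum>(i, j) \<in> {(i, j). i + j = k + 1 \<and> i \<le> k \<and> j \<le> k}. G i * G j)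
      - fps_X * (\<Sum>(j1, j2, j3) \<in> {(j1, j2, j3). j1 + j2 + j3 = k + 1 \<and> j1 \<le> k \<and> j2 \<le> k \<and> j3 \<le> k}.
               G j1 * G j2 * G j3))"

lemma euler_op_exp: "f has_fps_expansion F \<Longrightarrow> euler_op f has_fps_expansion eul F"
  unfolding euler_op_def eul_def
  by (intro has_fps_expansion_mult has_fps_expansion_fps_X has_fps_expansion_deriv)

lemma rec_step_exp:
  assumes "\<And>i. i \<le> k \<Longrightarrow> B i has_fps_expansion G i"
  assumes "fps_nth (G 0) 0 = 0"
  shows "rec_step B k has_fps_expansion rec_fps G k"
proof -
  have B0: "B 0 has_fps_expansion G 0" using assms by simp
  have S1: "(\<lambda>z. \<Sum>i\<le>k. B i z * euler_op (euler_op (B (k - i))) z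
                  - euler_op (B i) z * euler_op (B (k - i)) z)
        has_fps_expansion (\<Sum>i\<le>k. G i * eul (eul (G (k - i))) - eul (G i) * eul (G (k - i)))"
    by (intro has_fps_expansion_sum has_fps_expansion_diff has_fps_expansion_mult euler_op_exp assms) auto
  have S2: "(\<lambda>z. \<Sum>(i, j) \<in> {(i, j). i + j = k + 1 \<and> i \<le> k \<and> j \<le> k}. B i z * B j z)
      has_fps_expansion (\<Sum>(i, j) \<in> {(i, j). i + j = k + 1 \<and> i \<le> k \<and> j \<le> k}. G i * G j)"
  proof -
    have "(\<lambda>z. \<Sum>x \<in> {(i, j). i + j = k + 1 \<and> i \<le> k \<and> j \<le> k}. (\<lambda>x z. B (fst x) z * B (snd x) z) x z)
      has_fps_expansion (\<Sum>x \<in> {(i, j). i + j = k + 1 \<and> i \<le> k \<and> j \<le> k}. G (fst x) * G (snd x))"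
      by (intro has_fps_expansion_sum has_fps_expansion_mult assms) auto
    then show ?thesis by (simp add: case_prod_beta)
  qed
  have S3: "(\<lambda>z. \<Sum>(j1, j2, j3) \<in> {(j1, j2, j3). j1 + j2 + j3 = k + 1 \<and> j1 \<le> k \<and> j2 \<le> k \<and> j3 \<le> k}.
               B j1 z * B j2 z * B j3 z)
      has_fps_expansion (\<Sum>(j1, j2, j3) \<in> {(j1, j2, j3). j1 + j2 + j3 = k + 1 \<and> j1 \<le> k \<and> j2 \<le> k \<and> j3 \<le> k}.
               G j1 * G j2 * G j3)"
  proof -
    have "(\<lambda>z. \<Sum>x \<in> {(j1, j2, j3). j1 + j2 + j3 = k + 1 \<and> j1 \<le> k \<and> j2 \<le> k \<and> j3 \<le> k}.
          (\<lambda>x z. B (fst x) z * B (fst (snd x)) z * B (snd (snd x)) z) x z)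
      has_fps_expansion (\<Sum>x \<in> {(j1, j2, j3). j1 + j2 + j3 = k + 1 \<and> j1 \<le> k \<and> j2 \<le> k \<and> j3 \<le> k}.
          G (fst x) * G (fst (snd x)) * G (snd (snd x)))"
      by (intro has_fps_expansion_sum has_fps_expansion_mult assms) auto
    then show ?thesis by (simp add: case_prod_beta)
  qed
  have D: "(\<lambda>z. (1 + B 0 z) / (2 * B 0 z - 1)) has_fps_expansion (1 + G 0) / (2 * G 0 - 1)"
    using assms(2)
    by (intro has_fps_expansion_divide' has_fps_expansion_add has_fps_expansion_diff
        has_fps_expansion_mult has_fps_expansion_1 has_fps_expansion_numeral B0) auto
  have "(\<lambda>z. (1 + B 0 z) / (2 * B 0 z - 1) *
      ( euler_op (euler_op (B k)) z
      + (\<Sum>i\<le>k. B i z * euler_op (euler_op (B (k - i))) z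
                  - euler_op (B i) z * euler_op (B (k - i)) z)
      - (3 * z) * (\<Sum>(i, j) \<in> {(i, j). i + j = k + 1 \<and> i \<le> k \<and> j \<le> k}. B i z * B j z)
      - z * (\<Sum>(j1, j2, j3) \<in> {(j1, j2, j3). j1 + j2 + j3 = k + 1 \<and> j1 \<le> k \<and> j2 \<le> k \<and> j3 \<le> k}.
               B j1 z * B j2 z * B j3 z))) has_fps_expansion rec_fps G k"
    unfolding rec_fps_def
    by (intro has_fps_expansion_mult has_fps_expansion_add has_fps_expansion_diff D S1 S2 S3
          euler_op_exp assms has_fps_expansion_numeral has_fps_expansion_fps_X) auto
  then show ?thesis unfolding rec_step_def by simp
qed

primrec F_list :: "complex fps \<Rightarrow> nat \<Rightarrow> complex fps list" where
  "F_list F0 0 = [F0]"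
| "F_list F0 (Suc k) = F_list F0 k @ [rec_fps (\<lambda>i. F_list F0 k ! i) k]"

lemma F_list_len: "length (F_list F0 k) = Suc k"
  by (induction k) auto

lemma A_list_len: "length (A_list A0 k) = Suc k"
  by (induction k) auto

lemma F_list_stable: "i \<le> k \<Longrightarrow> F_list F0 k ! i = F_list F0 i ! i"
proof (induction k)
  case 0 then show ?case by simp
next
  case (Suc k)
  show ?case
  proof (cases "i \<le> k")
    case True
    then show ?thesis using Suc by (simp add: nth_append F_list_len)
  next
    case False
    then have "i = Suc k" using Suc by simp
    then show ?thesis by simp
  qed
qed

lemma F_list_0: "F_list F0 k ! 0 = F0"
  using F_list_stable[of 0 k F0] by simp

lemma A_list_exp:
  assumes "A0 has_fps_expansion F0" "fps_nth F0 0 = 0"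
  shows "i \<le> k \<Longrightarrow> (A_list A0 k ! i) has_fps_expansion (F_list F0 k ! i)"
proof (induction k arbitrary: i)
  case 0 then show ?case using assms by simp
next
  case (Suc k)
  show ?case
  proof (cases "i \<le> k")
    case True
    then show ?thesis using Suc by (simp add: nth_append F_list_len A_list_len)
  next
    case False
    then have i: "i = Suc k" using Suc by simp
    have "rec_step (\<lambda>i. A_list A0 k ! i) k has_fps_expansion rec_fps (\<lambda>i. F_list F0 k ! i) k"
      by (rule rec_step_exp) (use Suc.IH assms in \<open>auto simp: F_list_0\<close>)
    then show ?thesis using i by (simp add: nth_append F_list_len A_list_len)
  qed
qed

definition Af :: "complex fps \<Rightarrow> nat \<Rightarrow> complex fps" where
  "Af F0 i = F_list F0 i ! i"

lemma rec_fps_cong: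
  assumes "\<And>i. i \<le> k \<Longrightarrow> G i = G' i"
  shows "rec_fps G k = rec_fps G' k"
proof -
  have S1: "(\<Sum>i\<le>k. G i * eul (eul (G (k - i))) - eul (G i) * eul (G (k - i)))
      = (\<Sum>i\<le>k. G' i * eul (eul (G' (k - i))) - eul (G' i) * eul (G' (k - i)))"
    by (intro sum.cong refl) (clarsimp simp: assms)
  have S2: "(\<Sum>(i, j) \<in> {(i, j). i + j = k + 1 \<and> i \<le> k \<and> j \<le> k}. G i * G j)
      = (\<Sum>(i, j) \<in> {(i, j). i + j = k + 1 \<and> i \<le> k \<and> j \<le> k}. G' i * G' j)"
    by (intro sum.cong refl) (clarsimp simp: assms)
  have S3: "(\<Sum>(j1, j2, j3) \<in> {(j1, j2, j3). j1 + j2 + j3 = k + 1 \<and> j1 \<le> k \<and> j2 \<le> k \<and> j3 \<le> k}.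
               G j1 * G j2 * G j3) = (\<Sum>(j1, j2, j3) \<in> {(j1, j2, j3). j1 + j2 + j3 = k + 1 \<and> j1 \<le> k \<and> j2 \<le> k \<and> j3 \<le> k}.
               G' j1 * G' j2 * G' j3)"
    by (intro sum.cong refl) (clarsimp simp: assms)
  have "G 0 = G' 0" "G k = G' k" by (auto simp: assms)
  show ?thesis unfolding rec_fps_def S1 S2 S3 \<open>G 0 = G' 0\<close> \<open>G k = G' k\<close> by (rule refl)
qed

lemma Af_Suc: "Af F0 (Suc k) = rec_fps (Af F0) k"
proof -
  have "Af F0 (Suc k) = rec_fps (\<lambda>i. F_list F0 k ! i) k"
    unfolding Af_def by (simp only: F_list.simps nth_append F_list_len) simp
  also have "\<dots> = rec_fps (Af F0) k"
    unfolding Af_def by (rule rec_fps_cong) (rule F_list_stable)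
  finally show ?thesis .
qed

lemma Af_0: "Af F0 0 = F0" by (simp add: Af_def)

lemma NN_power: "NN F \<Longrightarrow> NN (F ^ j)"
  by (simp add: NN_NNupto NNupto_power)

lemma NN_fpsX: "NN fps_X" by (auto simp: NN_def)

lemma F0_props:
  fixes F0 :: "complex fps"
  assumes eq: "F0 = fps_X * (1 + F0) ^ 3"
  shows "NN F0" "F0 $ 0 = 0" "F0 $ 1 = 1" "\<And>n. n \<ge> 1 \<Longrightarrow> F0 $ n \<noteq> 0"
proof -
  show z: "F0 $ 0 = 0" by (subst eq) simp
  have "NNupto m F0" for m
  proof (induction m)
    case 0 then show ?case using z by (intro NNupto_0) simp
  next
    case (Suc m)
    have "NNupto (Suc m) (fps_X * (1 + F0) ^ 3)"
      by (intro NNupto_X NNupto_power NNupto_add NNupto_one Suc)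
    then show ?case using eq by simp
  qed
  then show NN: "NN F0" by (simp add: NN_NNupto)
  have e3: "(1 + F0) ^ 3 = 1 + 3 * F0 + (3 * F0^2 + F0^3)"
    by algebra
  have Fs: "F0 $ Suc n = ((1 + F0) ^ 3) $ n" for n by (subst eq) simp
  show one: "F0 $ 1 = 1" using Fs[of 0] z by (simp add: fps_nth_power_0)
  show "F0 $ n \<noteq> 0" if "n \<ge> 1" for n
    using that
  proof (induction n rule: dec_induct)
    case base then show ?case using one by simp
  next
    case (step n)
    have NN2: "NN (3 * F0^2 + F0^3)"
      using NN by (intro NN_add NN_mult NN_numeral NN_power)
    have e: "F0 $ Suc n = 3 * F0 $ n + (3 * F0^2 + F0^3) $ n"
      unfolding Fs e3 using step(1) by (simp add: numeral_fps_const)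
    have a: "3 * F0 $ n \<noteq> 0" using step by simp
    have b: "3 * F0 $ n \<in> \<nat>" using NN unfolding NN_def by (intro Nats_mult) auto
    have c: "(3 * F0^2 + F0^3) $ n \<in> \<nat>" using NN2 unfolding NN_def by blast
    show ?case unfolding e by (rule Nats_add_nz[OF b c a])
  qed
qed

definition cs :: "nat \<Rightarrow> complex fps" where "cs j = fps_const ((-1)^j)"

definition Bq :: "complex fps \<Rightarrow> nat \<Rightarrow> complex fps" where "Bq F0 k = cs k * Af F0 k"

lemma cs_add: "cs i * cs j = cs (i + j)"
  by (simp add: cs_def power_add)

lemma cs_sq: "cs i * cs i = 1"
  by (simp add: cs_def)

lemma cs_Suc: "cs (Suc k) = - cs k"
  by (simp add: cs_def)

lemma Af_Bq: "Af F0 i = cs i * Bq F0 i"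
  by (simp add: Bq_def mult.assoc[symmetric] cs_sq)

lemma eul_cs: "eul (cs j * F) = cs j * eul F"
  by (simp add: eul_def cs_def algebra_simps)

lemma eul_nth0: "eul F $ 0 = 0" by (simp add: eul_nth)

lemma NN_nz: "NN F \<Longrightarrow> NN G \<Longrightarrow> F $ n \<noteq> 0 \<Longrightarrow> (F + G) $ n \<noteq> 0"
  unfolding NN_def by (simp add: Nats_add_nz)

definition Pr :: "complex fps \<Rightarrow> bool" where
  "Pr B \<longleftrightarrow> NN B \<and> B $ 0 = 0 \<and> B $ 1 = 1 \<and> (\<forall>n\<ge>1. B $ n \<noteq> 0)"

lemma step:
  fixes F0 :: "complex fps"
  assumes F0eq: "F0 = fps_X * (1 + F0) ^ 3"
  assumes IH: "\<And>i. i \<le> k \<Longrightarrow> Pr (Bq F0 i)"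
  shows "Pr (Bq F0 (Suc k))"
proof -
  define B where "B = Bq F0"
  have NNB: "\<And>i. i \<le> k \<Longrightarrow> NN (B i)" using IH by (simp add: Pr_def B_def)
  have B0: "\<And>i. i \<le> k \<Longrightarrow> B i $ 0 = 0" using IH by (simp add: Pr_def B_def)
  have B1: "B k $ 1 = 1" using IH by (simp add: Pr_def B_def)
  have Bnz: "\<And>n. n \<ge> 1 \<Longrightarrow> B k $ n \<noteq> 0" using IH by (simp add: Pr_def B_def)
  have F0z: "F0 $ 0 = 0" and F01: "F0 $ 1 = 1" and NNF0: "NN F0" using F0_props[OF F0eq] by auto
  define P2 where "P2 = {(i, j). i + j = k + 1 \<and> i \<le> k \<and> j \<le> k}"
  define P3 where "P3 = {(j1, j2, j3). j1 + j2 + j3 = k + 1 \<and> j1 \<le> k \<and> j2 \<le> k \<and> j3 \<le> k}"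
  define Q where "Q = (\<Sum>i\<le>k. B i * eul (eul (B (k - i))) - eul (B i) * eul (B (k - i)))"
  define S2 where "S2 = (\<Sum>(i, j) \<in> P2. B i * B j)"
  define S3 where "S3 = (\<Sum>(j1, j2, j3) \<in> P3. B j1 * B j2 * B j3)"
  define T where "T = eul (eul (B k)) + (Q + 3 * fps_X * S2 + fps_X * S3)"
  define R where "R = eul (eul (Af F0 k))
      + (\<Sum>i\<le>k. Af F0 i * eul (eul (Af F0 (k - i))) - eul (Af F0 i) * eul (Af F0 (k - i)))
      - 3 * fps_X * (\<Sum>(i, j) \<in> P2. Af F0 i * Af F0 j)
      - fps_X * (\<Sum>(j1, j2, j3) \<in> P3. Af F0 j1 * Af F0 j2 * Af F0 j3)"
  have AB: "Af F0 i = cs i * B i" for i by (simp add: B_def Af_Bq)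
  have h1: "eul (eul (Af F0 k)) = cs k * eul (eul (B k))" by (simp add: AB eul_cs)
  have h2: "(\<Sum>i\<le>k. Af F0 i * eul (eul (Af F0 (k - i))) - eul (Af F0 i) * eul (Af F0 (k - i))) = cs k * Q"
    unfolding Q_def sum_distrib_left
  proof (intro sum.cong refl)
    fix i assume "i \<in> {..k}"
    then have c: "cs i * cs (k - i) = cs k" using cs_add[of i "k - i"] by simp
    have "Af F0 i * eul (eul (Af F0 (k - i))) - eul (Af F0 i) * eul (Af F0 (k - i))
        = (cs i * cs (k - i)) * (B i * eul (eul (B (k - i))) - eul (B i) * eul (B (k - i)))"
      by (simp only: AB eul_cs) (simp add: algebra_simps)
    then show "Af F0 i * eul (eul (Af F0 (k - i))) - eul (Af F0 i) * eul (Af F0 (k - i))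
        = cs k * (B i * eul (eul (B (k - i))) - eul (B i) * eul (B (k - i)))" using c by simp
  qed
  have h3: "(\<Sum>(i, j) \<in> P2. Af F0 i * Af F0 j) = - cs k * S2"
    unfolding S2_def sum_distrib_left
  proof (intro sum.cong refl)
    fix x assume "x \<in> P2"
    then obtain i j where x: "x = (i, j)" "i + j = k + 1" by (auto simp: P2_def)
    have c: "cs i * cs j = - cs k" using cs_add[of i j] x cs_Suc[of k] by simp
    have "Af F0 i * Af F0 j = (cs i * cs j) * (B i * B j)" by (simp add: AB algebra_simps)
    then show "(case x of (i, j) \<Rightarrow> Af F0 i * Af F0 j) = - cs k * (case x of (i, j) \<Rightarrow> B i * B j)"
      using x c by simp
  qed
  have h4: "(\<Sum>(j1, j2, j3) \<in> P3. Af F0 j1 * Af F0 j2 * Af F0 j3) = - cs k * S3"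
    unfolding S3_def sum_distrib_left
  proof (intro sum.cong refl)
    fix x assume "x \<in> P3"
    then obtain i j l where x: "x = (i, j, l)" "i + j + l = k + 1" by (auto simp: P3_def)
    have c: "cs i * cs j * cs l = - cs k" using cs_add[of i j] cs_add[of "i + j" l] x cs_Suc[of k] by simp
    have "Af F0 i * Af F0 j * Af F0 l = (cs i * cs j * cs l) * (B i * B j * B l)" by (simp add: AB algebra_simps)
    then show "(case x of (j1, j2, j3) \<Rightarrow> Af F0 j1 * Af F0 j2 * Af F0 j3)
             = - cs k * (case x of (j1, j2, j3) \<Rightarrow> B j1 * B j2 * B j3)"
      using x c by simp
  qed
  have hR: "R = cs k * T"
    unfolding R_def h1 h2 h3 h4 T_def by (simp add: algebra_simps)
  have rec: "Af F0 (Suc k) = (1 + F0) / (2 * F0 - 1) * R"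
    unfolding Af_Suc rec_fps_def R_def P2_def P3_def by (simp add: Af_0)
  have D0: "(2 * F0 - 1) $ 0 \<noteq> 0" using F0z by simp
  have hmul: "Af F0 (Suc k) * (2 * F0 - 1) = (1 + F0) * R"
  proof -
    have "Af F0 (Suc k) * (2 * F0 - 1) = (1 + F0) * R * (inverse (2 * F0 - 1) * (2 * F0 - 1))"
      unfolding rec fps_divide_unit[OF D0] by (simp add: algebra_simps)
    also have "inverse (2 * F0 - 1) * (2 * F0 - 1) = 1" using D0 by (rule inverse_mult_eq_1)
    finally show ?thesis by simp
  qed
  have hB': "B (Suc k) * (1 - 2 * F0) = (1 + F0) * T"
  proof -
    have "B (Suc k) * (1 - 2 * F0) = - cs (Suc k) * (Af F0 (Suc k) * (2 * F0 - 1))"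
      by (simp add: B_def Bq_def algebra_simps)
    also have "\<dots> = (cs k * cs k) * ((1 + F0) * T)"
      unfolding hmul hR cs_Suc by (simp add: algebra_simps)
    finally show ?thesis by (simp add: cs_sq)
  qed
  define V where "V = 2 * (1 + F0) ^ 3"
  have XV: "fps_X * (V * B (Suc k)) = 2 * F0 * B (Suc k)"
  proof -
    have "fps_X * (V * B (Suc k)) = 2 * (fps_X * (1 + F0) ^ 3) * B (Suc k)"
      by (simp add: V_def algebra_simps)
    then show ?thesis unfolding F0eq[symmetric] .
  qed
  have eqB: "B (Suc k) = (1 + F0) * T + fps_X * (V * B (Suc k))"
    unfolding XV using hB' by (simp add: algebra_simps)
  have NNS2: "NN S2" unfolding S2_def
    by (rule NN_sum) (auto simp: P2_def intro!: NN_mult NNB)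
  have NNS3: "NN S3" unfolding S3_def
    by (rule NN_sum) (auto simp: P3_def intro!: NN_mult NNB)
  have NNQ: "NN Q" unfolding Q_def by (rule NN_quad) (rule NNB)
  have NNrest: "NN (Q + 3 * fps_X * S2 + fps_X * S3)"
    by (intro NN_add NN_mult NN_numeral NN_fpsX NNQ NNS2 NNS3)
  have NNEB: "NN (eul (eul (B k)))" by (intro NN_eul NNB) simp
  have NNT: "NN T" unfolding T_def by (intro NN_add NNEB NNrest)
  have NNV: "NN V" unfolding V_def by (intro NN_mult NN_numeral NN_power NN_add NN_one NNF0)
  have NNB': "NN (B (Suc k))"
    by (rule NN_lin[OF eqB]) (intro NN_mult NN_add NN_one NNF0 NNT, rule NNV)
  have T0: "T $ 0 = 0"
    by (simp add: T_def Q_def fps_sum_nth eul_nth)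
  have B'0: "B (Suc k) $ 0 = 0"
    by (subst eqB) (simp add: T0)
  have Q1: "Q $ 1 = 0"
    unfolding Q_def fps_sum_nth by (intro sum.neutral ballI) (simp add: eul_nth B0)
  have S20: "S2 $ 0 = 0"
    unfolding S2_def fps_sum_nth by (intro sum.neutral ballI) (auto simp: P2_def B0)
  have S30: "S3 $ 0 = 0"
    unfolding S3_def fps_sum_nth by (intro sum.neutral ballI) (auto simp: P3_def B0)
  have T1: "T $ Suc 0 = 1"
    unfolding T_def using Q1 S20 S30 B1 by (simp add: eul_nth mult.assoc numeral_fps_const)
  have B'1: "B (Suc k) $ 1 = 1"
    by (subst eqB) (simp add: T0 T1 F0z B'0 F01[simplified])
  have B'nz: "B (Suc k) $ n \<noteq> 0" if n: "n \<ge> 1" for n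
  proof -
    have eq2: "B (Suc k) = eul (eul (B k)) + ((Q + 3 * fps_X * S2 + fps_X * S3) + (F0 * T + fps_X * (V * B (Suc k))))"
      by (subst eqB) (simp add: T_def algebra_simps)
    have "eul (eul (B k)) $ n \<noteq> 0" using n Bnz[OF n] by (simp add: eul_nth)
    then show ?thesis
      by (subst eq2, intro NN_nz NNEB NN_add NNrest NN_mult NNF0 NNT NN_X NNV NNB')
  qed
  show ?thesis using NNB' B'0 B'1 B'nz by (simp add: Pr_def B_def)
qed


lemma all_Pr:
  fixes F0 :: "complex fps"
  assumes F0eq: "F0 = fps_X * (1 + F0) ^ 3"
  shows "Pr (Bq F0 k)"
proof -
  have "\<forall>i\<le>k. Pr (Bq F0 i)"
  proof (induction k)
    case 0
    have "Bq F0 0 = F0" by (simp add: Bq_def cs_def Af_0)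
    then show ?case using F0_props[OF F0eq] by (simp add: Pr_def)
  next
    case (Suc k)
    then have "Pr (Bq F0 (Suc k))" by (intro step[OF F0eq]) auto
    then show ?case using Suc by (auto simp: le_Suc_eq)
  qed
  then show ?thesis by simp
qed

theorem proposition3:
  fixes A0 :: "complex \<Rightarrow> complex" and r :: real
  assumes "r > 0"
    and "A0 holomorphic_on ball 0 r"
    and "A0 0 = 0"
    and "\<And>z. z \<in> ball 0 r \<Longrightarrow> z * (1 + A0 z) ^ 3 = A0 z"
  shows "\<forall>k. A_seq A0 k 0 = 0
            \<and> (\<forall>n\<ge>1. \<exists>m::nat. m > 0 \<and> taylor_coeff (A_seq A0 k) n = (-1) ^ k * of_nat m)
            \<and> taylor_coeff (A_seq A0 k) 1 = (-1) ^ k"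
proof
  fix k
  define F0 where "F0 = fps_expansion A0 0"
  have hA0: "A0 has_fps_expansion F0"
    unfolding F0_def using assms(1,2) by (intro has_fps_expansion_fps_expansion) auto
  have h2: "(\<lambda>z. z * (1 + A0 z) ^ 3) has_fps_expansion fps_X * (1 + F0) ^ 3"
    by (intro has_fps_expansion_mult has_fps_expansion_fps_X has_fps_expansion_power
        has_fps_expansion_add has_fps_expansion_1 hA0)
  have ev: "eventually (\<lambda>z. z * (1 + A0 z) ^ 3 = A0 z) (nhds 0)"
  proof -
    have "eventually (\<lambda>z. z \<in> ball 0 r) (nhds (0::complex))"
      using assms(1) by (intro eventually_nhds_in_open) auto
    then show ?thesis by eventually_elim (rule assms(4))
  qed
  have h3: "A0 has_fps_expansion fps_X * (1 + F0) ^ 3"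
    using h2 has_fps_expansion_cong[OF ev refl] by simp
  have F0eq: "F0 = fps_X * (1 + F0) ^ 3"
    by (rule fps_ext) (simp only: fps_nth_fps_expansion[OF hA0] fps_nth_fps_expansion[OF h3])
  have F0z: "F0 $ 0 = 0" using F0_props[OF F0eq] by simp
  have exp: "A_seq A0 k has_fps_expansion Af F0 k"
    unfolding A_seq_def Af_def by (rule A_list_exp[OF hA0 F0z]) simp
  have tc: "taylor_coeff (A_seq A0 k) n = Af F0 k $ n" for n
    unfolding taylor_coeff_def by (simp add: fps_nth_fps_expansion[OF exp])
  have Pk: "Pr (Bq F0 k)" by (rule all_Pr[OF F0eq])
  have AfB: "Af F0 k $ n = (-1) ^ k * Bq F0 k $ n" for n
    by (simp add: Af_Bq[of F0 k] cs_def)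
  have "A_seq A0 k 0 = Af F0 k $ 0"
    using has_fps_expansion_imp_0_eq_fps_nth_0[OF exp] .
  also have "\<dots> = 0" using Pk by (simp add: AfB Pr_def)
  finally have c1: "A_seq A0 k 0 = 0" .
  have c2: "\<exists>m::nat. m > 0 \<and> taylor_coeff (A_seq A0 k) n = (-1) ^ k * of_nat m" if "n \<ge> 1" for n
  proof -
    have "Bq F0 k $ n \<in> \<nat>" "Bq F0 k $ n \<noteq> 0" using Pk that by (auto simp: Pr_def NN_def)
    then obtain m where m: "Bq F0 k $ n = of_nat m" "m > 0" by (auto elim!: Nats_cases)
    then show ?thesis by (intro exI[of _ m]) (simp add: tc AfB)
  qed
  have c3: "taylor_coeff (A_seq A0 k) 1 = (-1) ^ k"
    using Pk by (simp add: tc AfB Pr_def)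
  show "A_seq A0 k 0 = 0
            \<and> (\<forall>n\<ge>1. \<exists>m::nat. m > 0 \<and> taylor_coeff (A_seq A0 k) n = (-1) ^ k * of_nat m)
            \<and> taylor_coeff (A_seq A0 k) 1 = (-1) ^ k"
    using c1 c2 c3 by blast
qed

end
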